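(* Let $C$, $\mathcal D$ and $d$ be as in the context. For subsets $A,B\subseteq{\bf R}^d$ define $\hat d(A;B)=\sup_{\psi\in\mathcal D}\inf_{x\in A,y\in B}(\psi(x)-\psi(y))$. If $A$ and $B$ are compact then $\hat d(A;B)=d(A;B)$.
   Context: Let $C=(c_{ij})$ be a real-valued symmetric $d\times d$ matrix function on ${\bf R}^d$ with measurable, locally integrable entries, positive-definite almost everywhere. Let $\mathcal D=\{\psi\in W^{1,\infty}({\bf R}^d):\sum_{i,j}c_{ij}(\partial_i\psi)(\partial_j\psi)\le1$ a.e.$\}$ (elements identified with their continuous representatives), $d(x;y)=\sup_{\psi\in\mathcal D}(\psi(x)-\psi(y))\in[0,\infty]$, and $d(A;B)=\inf_{x\in A,y\in B}d(x;y)$. *)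

theory Defs
  imports "HOL-Analysis.Analysis"
begin

definition coeff_ok :: "(real^'n \<Rightarrow> real^'n^'n) \<Rightarrow> bool" where
  "coeff_ok C \<longleftrightarrow>
     (\<forall>x i j. C x $ i $ j = C x $ j $ i) \<and>
     (\<forall>i j. (\<lambda>x. C x $ i $ j) \<in> borel_measurable lebesgue) \<and>
     (\<forall>i j K. compact K \<longrightarrow> set_integrable lebesgue K (\<lambda>x. C x $ i $ j)) \<and>
     (AE x in lebesgue. \<forall>\<xi>::real^'n. \<xi> \<noteq> 0 \<longrightarrow>
        (\<Sum>i\<in>UNIV. \<Sum>j\<in>UNIV. C x $ i $ j * \<xi> $ i * \<xi> $ j) > 0)"

text \<open>W^{1,\<infinity>} functions (continuous representatives): bounded Lipschitz functions.\<close>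
definition W1inf :: "(real^'n \<Rightarrow> real) set" where
  "W1inf = {\<psi>. bounded (range \<psi>) \<and> (\<exists>L. L-lipschitz_on UNIV \<psi>)}"

text \<open>The class D: a.e. (where the Lipschitz function is differentiable, by Rademacher
  a.e.) the gradient satisfies sum c_ij d_i psi d_j psi <= 1.\<close>
definition Dset :: "(real^'n \<Rightarrow> real^'n^'n) \<Rightarrow> (real^'n \<Rightarrow> real) set" where
  "Dset C = {\<psi> \<in> W1inf. AE x in lebesgue. \<exists>D. (\<psi> has_derivative D) (at x) \<and>
      (\<Sum>i\<in>UNIV. \<Sum>j\<in>UNIV. C x $ i $ j * D (axis i 1) * D (axis j 1)) \<le> 1}"

definition dist_C :: "(real^'n \<Rightarrow> real^'n^'n) \<Rightarrow> real^'n \<Rightarrow> real^'n \<Rightarrow> ereal" where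
  "dist_C C x y = (SUP \<psi>\<in>Dset C. ereal (\<psi> x - \<psi> y))"

definition setdist_C :: "(real^'n \<Rightarrow> real^'n^'n) \<Rightarrow> (real^'n) set \<Rightarrow> (real^'n) set \<Rightarrow> ereal" where
  "setdist_C C A B = (INF p\<in>A \<times> B. dist_C C (fst p) (snd p))"

definition setdist_hat_C :: "(real^'n \<Rightarrow> real^'n^'n) \<Rightarrow> (real^'n) set \<Rightarrow> (real^'n) set \<Rightarrow> ereal" where
  "setdist_hat_C C A B = (SUP \<psi>\<in>Dset C. INF p\<in>A \<times> B. ereal (\<psi> (fst p) - \<psi> (snd p)))"

end

theory Submission imports Defs begin

lemma level_countable:
  fixes f :: "real^'n \<Rightarrow> real"
  assumes cont: "continuous_on UNIV f"
  shows "countable {c. {z. f z = c} \<notin> null_sets lebesgue}"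
proof -
  have fm: "f \<in> borel_measurable lebesgue"
    using cont by (simp add: borel_measurable_continuous_onI measurable_completion)
  define M where "M k = distr (lebesgue_on (cball (0::real^'n) (real k))) borel f" for k :: nat
  have fin: "finite_measure (M k)" for k
    unfolding M_def
    by (intro finite_measure.finite_measure_distr finite_measure_lebesgue_on lmeasurable_cball
        measurable_restrict_space1 fm)
  have cnt: "countable {c. measure (M k) {c} \<noteq> 0}" for k
    using finite_measure.countable_support[OF fin] by simp
  have sub: "{c. {z. f z = c} \<notin> null_sets lebesgue} \<subseteq> (\<Union>k. {c. measure (M k) {c} \<noteq> 0})"
  proof
    fix c assume "c \<in> {c. {z. f z = c} \<notin> null_sets lebesgue}"
    hence nn: "{z. f z = c} \<notin> null_sets lebesgue" by simp
    show "c \<in> (\<Union>k. {c. measure (M k) {c} \<noteq> 0})"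
    proof (rule ccontr)
      assume "c \<notin> (\<Union>k. {c. measure (M k) {c} \<noteq> 0})"
      hence z: "measure (M k) {c} = 0" for k by auto
      have lm: "{z. f z = c} \<inter> cball 0 (real k) \<in> lmeasurable" for k
      proof (rule bounded_set_imp_lmeasurable)
        have "{z. f z = c} \<in> sets lebesgue"
          using measurable_sets[OF fm, of "{c}"] by (simp add: vimage_def)
        then show "{z. f z = c} \<inter> cball 0 (real k) \<in> sets lebesgue" by auto
      qed (meson bounded_Int bounded_cball)
      have "{z. f z = c} \<inter> cball 0 (real k) \<in> null_sets lebesgue" for k
      proof -
        have "measure (M k) {c} = measure (lebesgue_on (cball 0 (real k))) (f -` {c} \<inter> cball 0 (real k))"
          unfolding M_def
          by (subst measure_distr) (auto intro!: measurable_restrict_space1 fm)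
        also have "\<dots> = measure lebesgue ({z. f z = c} \<inter> cball 0 (real k))"
          by (subst measure_restrict_space) (auto simp: vimage_def)
        finally have "measure lebesgue ({z. f z = c} \<inter> cball 0 (real k)) = 0" using z by simp
        then show ?thesis using lm
          by (intro null_setsI) (simp_all add: emeasure_eq_measure2[OF lm] fmeasurableD[OF lm])
      qed
      hence "(\<Union>k. {z. f z = c} \<inter> cball 0 (real k)) \<in> null_sets lebesgue"
        by (intro null_sets_UN) 
      moreover have "(\<Union>k. {z. f z = c} \<inter> cball 0 (real k)) = {z. f z = c}"
        using real_arch_simple by (auto simp: dist_norm) 
      ultimately show False using nn by simp
    qed
  qed
  show ?thesis
    by (rule countable_subset[OF sub]) (intro countable_UN[of UNIV] cnt, auto)
qed


lemma W1inf_cont: "\<psi> \<in> W1inf \<Longrightarrow> continuous_on UNIV \<psi>"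
  unfolding W1inf_def using lipschitz_on_continuous_on by blast

lemma D_W1inf: "\<psi> \<in> Dset C \<Longrightarrow> \<psi> \<in> W1inf"
  unfolding Dset_def by blast

lemma D_cont: "\<psi> \<in> Dset C \<Longrightarrow> continuous_on UNIV \<psi>"
  using D_W1inf W1inf_cont by blast

lemma W1inf_max:
  assumes "f \<in> W1inf" "g \<in> W1inf"
  shows "(\<lambda>z. max (f z) (g z)) \<in> W1inf" "(\<lambda>z. min (f z) (g z)) \<in> W1inf"
proof -
  obtain L where L: "L-lipschitz_on UNIV f" using assms unfolding W1inf_def by blast
  obtain M where M: "M-lipschitz_on UNIV g" using assms unfolding W1inf_def by blast
  obtain a where a: "\<And>z. \<bar>f z\<bar> \<le> a" using assms unfolding W1inf_def bounded_iff by auto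
  obtain b where b: "\<And>z. \<bar>g z\<bar> \<le> b" using assms unfolding W1inf_def bounded_iff by auto
  have Lf: "\<bar>f x - f y\<bar> \<le> L * dist x y" for x y using L unfolding lipschitz_on_def dist_real_def by auto
  have Mg: "\<bar>g x - g y\<bar> \<le> M * dist x y" for x y using M unfolding lipschitz_on_def dist_real_def by auto
  have L0: "0 \<le> L" "0 \<le> M" using L M unfolding lipschitz_on_def by auto
  have d0: "0 \<le> dist x y" for x y :: "real^'a" by simp
  have lm: "\<bar>max (f x) (g x) - max (f y) (g y)\<bar> \<le> max L M * dist x y" for x y
  proof -
    have "L * dist x y \<le> max L M * dist x y" "M * dist x y \<le> max L M * dist x y"
      by (auto intro!: mult_right_mono)
    thus ?thesis using Lf[of x y] Mg[of x y] by (auto simp: max_def abs_if split: if_splits)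
  qed
  have ln: "\<bar>min (f x) (g x) - min (f y) (g y)\<bar> \<le> max L M * dist x y" for x y
  proof -
    have "L * dist x y \<le> max L M * dist x y" "M * dist x y \<le> max L M * dist x y"
      by (auto intro!: mult_right_mono)
    thus ?thesis using Lf[of x y] Mg[of x y] by (auto simp: min_def abs_if split: if_splits)
  qed
  show "(\<lambda>z. max (f z) (g z)) \<in> W1inf"
    unfolding W1inf_def
  proof (intro CollectI conjI exI)
    show "bounded (range (\<lambda>z. max (f z) (g z)))"
      unfolding bounded_iff proof (intro exI[of _ "max a b"], safe)
        fix z show "norm (max (f z) (g z)) \<le> max a b" using a[of z] b[of z] by (simp add: abs_le_iff) linarith
      qed
    show "(max L M)-lipschitz_on UNIV (\<lambda>z. max (f z) (g z))"
      unfolding lipschitz_on_def dist_real_def using lm L0 by auto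
  qed
  show "(\<lambda>z. min (f z) (g z)) \<in> W1inf"
    unfolding W1inf_def
  proof (intro CollectI conjI exI)
    show "bounded (range (\<lambda>z. min (f z) (g z)))"
      unfolding bounded_iff proof (intro exI[of _ "max a b"], safe)
        fix z show "norm (min (f z) (g z)) \<le> max a b" using a[of z] b[of z] by (simp add: abs_le_iff) linarith
      qed
    show "(max L M)-lipschitz_on UNIV (\<lambda>z. min (f z) (g z))"
      unfolding lipschitz_on_def dist_real_def using ln L0 by auto
  qed
qed

lemma D_local:
  assumes "\<psi>1 \<in> Dset C" "\<psi>2 \<in> Dset C" "g \<in> W1inf"
    and ae: "AE z in lebesgue. \<exists>S. open S \<and> z \<in> S \<and> ((\<forall>w\<in>S. g w = \<psi>1 w) \<or> (\<forall>w\<in>S. g w = \<psi>2 w))"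
  shows "g \<in> Dset C"
proof -
  have a1: "AE x in lebesgue. \<exists>D. (\<psi>1 has_derivative D) (at x) \<and>
      (\<Sum>i\<in>UNIV. \<Sum>j\<in>UNIV. C x $ i $ j * D (axis i 1) * D (axis j 1)) \<le> 1"
    using assms(1) unfolding Dset_def by blast
  have a2: "AE x in lebesgue. \<exists>D. (\<psi>2 has_derivative D) (at x) \<and>
      (\<Sum>i\<in>UNIV. \<Sum>j\<in>UNIV. C x $ i $ j * D (axis i 1) * D (axis j 1)) \<le> 1"
    using assms(2) unfolding Dset_def by blast
  have "AE x in lebesgue. \<exists>D. (g has_derivative D) (at x) \<and>
      (\<Sum>i\<in>UNIV. \<Sum>j\<in>UNIV. C x $ i $ j * D (axis i 1) * D (axis j 1)) \<le> 1"
    using a1 a2 ae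
  proof eventually_elim
    case (elim x)
    then obtain S where S: "open S" "x \<in> S" "(\<forall>w\<in>S. g w = \<psi>1 w) \<or> (\<forall>w\<in>S. g w = \<psi>2 w)" by blast
    from S(3) show ?case
    proof
      assume h: "\<forall>w\<in>S. g w = \<psi>1 w"
      from elim(1) obtain D where D: "(\<psi>1 has_derivative D) (at x)"
        "(\<Sum>i\<in>UNIV. \<Sum>j\<in>UNIV. C x $ i $ j * D (axis i 1) * D (axis j 1)) \<le> 1" by blast
      have "(g has_derivative D) (at x)"
        using has_derivative_transform_within_open[OF D(1) S(1) S(2)] h by auto
      with D(2) show ?thesis by blast
    next
      assume h: "\<forall>w\<in>S. g w = \<psi>2 w"
      from elim(2) obtain D where D: "(\<psi>2 has_derivative D) (at x)"
        "(\<Sum>i\<in>UNIV. \<Sum>j\<in>UNIV. C x $ i $ j * D (axis i 1) * D (axis j 1)) \<le> 1" by blast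
      have "(g has_derivative D) (at x)"
        using has_derivative_transform_within_open[OF D(1) S(1) S(2)] h by auto
      with D(2) show ?thesis by blast
    qed
  qed
  then show ?thesis using assms(3) unfolding Dset_def by blast
qed

lemma D_max_min:
  assumes "\<psi>1 \<in> Dset C" "\<psi>2 \<in> Dset C" "{z. \<psi>1 z = \<psi>2 z} \<in> null_sets lebesgue"
  shows "(\<lambda>z. max (\<psi>1 z) (\<psi>2 z)) \<in> Dset C" "(\<lambda>z. min (\<psi>1 z) (\<psi>2 z)) \<in> Dset C"
proof -
  have c1: "continuous_on UNIV \<psi>1" and c2: "continuous_on UNIV \<psi>2" using assms D_cont by blast+
  have o1: "open {w. \<psi>1 w < \<psi>2 w}" and o2: "open {w. \<psi>2 w < \<psi>1 w}"
    using open_Collect_less[OF c1 c2] open_Collect_less[OF c2 c1] by auto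
  have ae: "AE z in lebesgue. z \<notin> {z. \<psi>1 z = \<psi>2 z}"
    using AE_not_in[OF assms(3)] .
  show "(\<lambda>z. max (\<psi>1 z) (\<psi>2 z)) \<in> Dset C"
    using assms(1,2) W1inf_max(1)[OF D_W1inf[OF assms(1)] D_W1inf[OF assms(2)]]
  proof (rule D_local)
    show "AE z in lebesgue. \<exists>S. open S \<and> z \<in> S \<and> ((\<forall>w\<in>S. max (\<psi>1 w) (\<psi>2 w) = \<psi>1 w) \<or> (\<forall>w\<in>S. max (\<psi>1 w) (\<psi>2 w) = \<psi>2 w))"
      using ae
    proof eventually_elim
      case (elim z)
      show ?case
      proof (cases "\<psi>1 z < \<psi>2 z")
        case True
        then show ?thesis using o1 by (intro exI[of _ "{w. \<psi>1 w < \<psi>2 w}"]) auto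
      next
        case False
        then have "\<psi>2 z < \<psi>1 z" using elim by auto
        then show ?thesis using o2 by (intro exI[of _ "{w. \<psi>2 w < \<psi>1 w}"]) auto
      qed
    qed
  qed
  show "(\<lambda>z. min (\<psi>1 z) (\<psi>2 z)) \<in> Dset C"
    using assms(1,2) W1inf_max(2)[OF D_W1inf[OF assms(1)] D_W1inf[OF assms(2)]]
  proof (rule D_local)
    show "AE z in lebesgue. \<exists>S. open S \<and> z \<in> S \<and> ((\<forall>w\<in>S. min (\<psi>1 w) (\<psi>2 w) = \<psi>1 w) \<or> (\<forall>w\<in>S. min (\<psi>1 w) (\<psi>2 w) = \<psi>2 w))"
      using ae
    proof eventually_elim
      case (elim z)
      show ?case
      proof (cases "\<psi>1 z < \<psi>2 z")
        case True
        then show ?thesis using o1 by (intro exI[of _ "{w. \<psi>1 w < \<psi>2 w}"]) auto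
      next
        case False
        then have "\<psi>2 z < \<psi>1 z" using elim by auto
        then show ?thesis using o2 by (intro exI[of _ "{w. \<psi>2 w < \<psi>1 w}"]) auto
      qed
    qed
  qed
qed

lemma D_shift:
  assumes "\<psi> \<in> Dset C" shows "(\<lambda>z. \<psi> z + k) \<in> Dset C"
proof -
  have w: "\<psi> \<in> W1inf" using assms D_W1inf by blast
  have "(\<lambda>z. \<psi> z + k) \<in> W1inf"
  proof -
    obtain L where L: "L-lipschitz_on UNIV \<psi>" using w unfolding W1inf_def by blast
    obtain a where a: "\<And>z. \<bar>\<psi> z\<bar> \<le> a" using w unfolding W1inf_def bounded_iff by auto
    have "L-lipschitz_on UNIV (\<lambda>z. \<psi> z + k)" using L unfolding lipschitz_on_def dist_real_def by auto
    moreover have "bounded (range (\<lambda>z. \<psi> z + k))"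
      unfolding bounded_iff using a by (intro exI[of _ "a + \<bar>k\<bar>"]) (auto intro: order_trans[OF abs_triangle_ineq] add_mono)
    ultimately show ?thesis unfolding W1inf_def by blast
  qed
  moreover have "AE x in lebesgue. \<exists>D. ((\<lambda>z. \<psi> z + k) has_derivative D) (at x) \<and>
      (\<Sum>i\<in>UNIV. \<Sum>j\<in>UNIV. C x $ i $ j * D (axis i 1) * D (axis j 1)) \<le> 1"
    using assms unfolding Dset_def
    by (auto elim!: eventually_mono intro: has_derivative_add_const)
  ultimately show ?thesis unfolding Dset_def by blast
qed

lemma D_zero: fixes C :: "real^'n \<Rightarrow> real^'n^'n" shows "(\<lambda>z. 0) \<in> Dset C"
proof -
  have "(\<lambda>z::real^'n. 0::real) \<in> W1inf" unfolding W1inf_def lipschitz_on_def by auto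
  moreover have "AE x in lebesgue. \<exists>D. ((\<lambda>z::real^'n. 0::real) has_derivative D) (at x) \<and>
      (\<Sum>i\<in>UNIV. \<Sum>j\<in>UNIV. C x $ i $ j * D (axis i 1) * D (axis j 1)) \<le> 1"
    by (intro AE_I2 exI[of _ "\<lambda>_. 0"]) auto
  ultimately show ?thesis unfolding Dset_def by blast
qed


lemma D_tie:
  assumes "\<psi>1 \<in> Dset C" "\<psi>2 \<in> Dset C" "(\<epsilon>::real) > 0"
  shows "\<exists>c. \<bar>c\<bar> < \<epsilon> \<and> {z. \<psi>1 z = \<psi>2 z + c} \<in> null_sets lebesgue"
proof -
  have "continuous_on UNIV (\<lambda>z. \<psi>1 z - \<psi>2 z)"
    using D_cont[OF assms(1)] D_cont[OF assms(2)] by (intro continuous_intros)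
  then have cX: "countable {c. {z. \<psi>1 z - \<psi>2 z = c} \<notin> null_sets lebesgue}"
    by (rule level_countable)
  have "uncountable {-\<epsilon><..<\<epsilon>}" using assms(3) by (simp add: uncountable_open_interval)
  then have "\<not> {-\<epsilon><..<\<epsilon>} \<subseteq> {c. {z. \<psi>1 z - \<psi>2 z = c} \<notin> null_sets lebesgue}"
    using cX countable_subset by blast
  then obtain c where c: "c \<in> {-\<epsilon><..<\<epsilon>}" "{z. \<psi>1 z - \<psi>2 z = c} \<in> null_sets lebesgue" by blast
  have "{z. \<psi>1 z = \<psi>2 z + c} = {z. \<psi>1 z - \<psi>2 z = c}" by auto
  with c show ?thesis by (intro exI[of _ c]) auto
qed

lemma D_fin_max:
  assumes "finite T" "T \<noteq> {}" "\<forall>i\<in>T. f i \<in> Dset C" "(\<epsilon>::real) > 0"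
  shows "\<exists>\<psi>\<in>Dset C. \<forall>z. (\<forall>i\<in>T. f i z \<le> \<psi> z + \<epsilon>) \<and> (\<exists>i\<in>T. \<psi> z \<le> f i z + \<epsilon>)"
  using assms
proof (induction T arbitrary: \<epsilon> rule: finite_ne_induct)
  case (singleton x)
  then show ?case by (intro bexI[of _ "f x"]) auto
next
  case (insert x F)
  obtain \<psi> where \<psi>: "\<psi> \<in> Dset C" "\<And>z. (\<forall>i\<in>F. f i z \<le> \<psi> z + \<epsilon>/2) \<and> (\<exists>i\<in>F. \<psi> z \<le> f i z + \<epsilon>/2)"
    using insert.IH[of "\<epsilon>/2"] insert.prems by auto
  have fx: "f x \<in> Dset C" using insert.prems by auto
  obtain c where c: "\<bar>c\<bar> < \<epsilon>/2" "{z. \<psi> z = f x z + c} \<in> null_sets lebesgue"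
    using D_tie[OF \<psi>(1) fx, of "\<epsilon>/2"] insert.prems by auto
  define g where "g z = f x z + c" for z
  have g: "g \<in> Dset C" unfolding g_def by (rule D_shift[OF fx])
  have "(\<lambda>z. max (\<psi> z) (g z)) \<in> Dset C"
    by (rule D_max_min(1)[OF \<psi>(1) g]) (use c in \<open>simp add: g_def\<close>)
  moreover have "(\<forall>i\<in>insert x F. f i z \<le> max (\<psi> z) (g z) + \<epsilon>) \<and> (\<exists>i\<in>insert x F. max (\<psi> z) (g z) \<le> f i z + \<epsilon>)" for z
  proof
    show "\<forall>i\<in>insert x F. f i z \<le> max (\<psi> z) (g z) + \<epsilon>"
      using \<psi>(2)[of z] c(1) by (auto simp: g_def)
    show "\<exists>i\<in>insert x F. max (\<psi> z) (g z) \<le> f i z + \<epsilon>"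
    proof (cases "\<psi> z \<le> g z")
      case True then show ?thesis using c(1) by (intro bexI[of _ x]) (auto simp: g_def)
    next
      case False
      then obtain i where "i \<in> F" "\<psi> z \<le> f i z + \<epsilon>/2" using \<psi>(2)[of z] by auto
      then show ?thesis using False insert.prems by (intro bexI[of _ i]) auto
    qed
  qed
  ultimately show ?case by (intro bexI[of _ "\<lambda>z. max (\<psi> z) (g z)"]) blast+
qed

lemma D_fin_min:
  assumes "finite T" "T \<noteq> {}" "\<forall>i\<in>T. f i \<in> Dset C" "(\<epsilon>::real) > 0"
  shows "\<exists>\<psi>\<in>Dset C. \<forall>z. (\<forall>i\<in>T. \<psi> z \<le> f i z + \<epsilon>) \<and> (\<exists>i\<in>T. f i z \<le> \<psi> z + \<epsilon>)"
  using assms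
proof (induction T arbitrary: \<epsilon> rule: finite_ne_induct)
  case (singleton x)
  then show ?case by (intro bexI[of _ "f x"]) auto
next
  case (insert x F)
  obtain \<psi> where \<psi>: "\<psi> \<in> Dset C" "\<And>z. (\<forall>i\<in>F. \<psi> z \<le> f i z + \<epsilon>/2) \<and> (\<exists>i\<in>F. f i z \<le> \<psi> z + \<epsilon>/2)"
    using insert.IH[of "\<epsilon>/2"] insert.prems by auto
  have fx: "f x \<in> Dset C" using insert.prems by auto
  obtain c where c: "\<bar>c\<bar> < \<epsilon>/2" "{z. \<psi> z = f x z + c} \<in> null_sets lebesgue"
    using D_tie[OF \<psi>(1) fx, of "\<epsilon>/2"] insert.prems by auto
  define g where "g z = f x z + c" for z
  have g: "g \<in> Dset C" unfolding g_def by (rule D_shift[OF fx])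
  have "(\<lambda>z. min (\<psi> z) (g z)) \<in> Dset C"
    by (rule D_max_min(2)[OF \<psi>(1) g]) (use c in \<open>simp add: g_def\<close>)
  moreover have "(\<forall>i\<in>insert x F. min (\<psi> z) (g z) \<le> f i z + \<epsilon>) \<and> (\<exists>i\<in>insert x F. f i z \<le> min (\<psi> z) (g z) + \<epsilon>)" for z
  proof
    show "\<forall>i\<in>insert x F. min (\<psi> z) (g z) \<le> f i z + \<epsilon>"
      using \<psi>(2)[of z] c(1) insert.prems by (auto simp: g_def min_le_iff_disj)
    show "\<exists>i\<in>insert x F. f i z \<le> min (\<psi> z) (g z) + \<epsilon>"
    proof (cases "g z \<le> \<psi> z")
      case True then show ?thesis using c(1) by (intro bexI[of _ x]) (auto simp: g_def)
    next
      case False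
      then obtain i where "i \<in> F" "f i z \<le> \<psi> z + \<epsilon>/2" using \<psi>(2)[of z] by auto
      then show ?thesis using False insert.prems by (intro bexI[of _ i]) auto
    qed
  qed
  ultimately show ?case by (intro bexI[of _ "\<lambda>z. min (\<psi> z) (g z)"]) blast+
qed


lemma main_sep:
  fixes C :: "real^'n \<Rightarrow> real^'n^'n" and A B :: "(real^'n) set" and r r2 :: real
  assumes "compact A" "compact B" "r < r2" "\<forall>x\<in>A. \<forall>y\<in>B. ereal r2 < dist_C C x y"
  shows "\<exists>\<psi>\<in>Dset C. \<forall>x\<in>A. \<forall>y\<in>B. r \<le> \<psi> x - \<psi> y"
proof (cases "A = {} \<or> B = {}")
  case True
  then show ?thesis using D_zero[of C] by blast
next
  case False
  then have An: "A \<noteq> {}" and Bn: "B \<noteq> {}" by auto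
  define \<delta> where "\<delta> = (r2 - r) / 5"
  have \<delta>: "\<delta> > 0" using assms(3) by (simp add: \<delta>_def)
  have step1: "\<exists>\<Phi>\<in>Dset C. \<Phi> y \<le> \<delta> \<and> (\<forall>z\<in>A. r2 - \<delta> < \<Phi> z)" if y: "y \<in> B" for y
  proof -
    have "\<exists>\<phi>. \<phi> \<in> Dset C \<and> \<phi> y = 0 \<and> r2 < \<phi> x" if x: "x \<in> A" for x
    proof -
      have "ereal r2 < (SUP \<psi>\<in>Dset C. ereal (\<psi> x - \<psi> y))"
        using assms(4) x y unfolding dist_C_def by blast
      then obtain \<psi> where \<psi>: "\<psi> \<in> Dset C" "r2 < \<psi> x - \<psi> y" by (auto simp: less_SUP_iff)
      show ?thesis
        using D_shift[OF \<psi>(1), of "- \<psi> y"] \<psi>(2)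
        by (intro exI[of _ "\<lambda>z. \<psi> z + - \<psi> y"]) auto
    qed
    then obtain \<phi> where \<phi>: "\<And>x. x \<in> A \<Longrightarrow> \<phi> x \<in> Dset C \<and> \<phi> x y = 0 \<and> r2 < \<phi> x x"
      by metis
    have opn: "open {z. r2 < \<phi> x z}" if "x \<in> A" for x
      using open_Collect_less[OF continuous_on_const D_cont] \<phi>[OF that] by blast
    have cov: "A \<subseteq> (\<Union>x\<in>A. {z. r2 < \<phi> x z})" using \<phi> by auto
    obtain T where T: "T \<subseteq> A" "finite T" "A \<subseteq> (\<Union>x\<in>T. {z. r2 < \<phi> x z})"
      using compactE_image[OF assms(1) opn cov] by blast
    have Tn: "T \<noteq> {}" using T(3) An by auto
    obtain \<Phi> where \<Phi>: "\<Phi> \<in> Dset C" "\<And>z. (\<forall>i\<in>T. \<phi> i z \<le> \<Phi> z + \<delta>) \<and> (\<exists>i\<in>T. \<Phi> z \<le> \<phi> i z + \<delta>)"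
      using D_fin_max[OF T(2) Tn _ \<delta>, of \<phi> C] \<phi> T(1) by blast
    have "\<Phi> y \<le> \<delta>" using \<Phi>(2)[of y] \<phi> T(1) by fastforce
    moreover have "r2 - \<delta> < \<Phi> z" if zA: "z \<in> A" for z
    proof -
      obtain i where "i \<in> T" "r2 < \<phi> i z" using T(3) zA by blast
      then show ?thesis using \<Phi>(2)[of z] by force
    qed
    ultimately show ?thesis using \<Phi>(1) by blast
  qed
  then obtain \<Phi> where \<Phi>: "\<And>y. y \<in> B \<Longrightarrow> \<Phi> y \<in> Dset C \<and> \<Phi> y y \<le> \<delta> \<and> (\<forall>z\<in>A. r2 - \<delta> < \<Phi> y z)"
    by metis
  have opn: "open {w. \<Phi> y w < 2 * \<delta>}" if "y \<in> B" for y
    using open_Collect_less[OF D_cont continuous_on_const] \<Phi>[OF that] by blast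
  have cov: "B \<subseteq> (\<Union>y\<in>B. {w. \<Phi> y w < 2 * \<delta>})" using \<Phi> \<delta> by fastforce
  obtain T where T: "T \<subseteq> B" "finite T" "B \<subseteq> (\<Union>y\<in>T. {w. \<Phi> y w < 2 * \<delta>})"
    using compactE_image[OF assms(2) opn cov] by blast
  have Tn: "T \<noteq> {}" using T(3) Bn by auto
  obtain \<Psi> where \<Psi>: "\<Psi> \<in> Dset C" "\<And>z. (\<forall>i\<in>T. \<Psi> z \<le> \<Phi> i z + \<delta>) \<and> (\<exists>i\<in>T. \<Phi> i z \<le> \<Psi> z + \<delta>)"
    using D_fin_min[OF T(2) Tn _ \<delta>, of \<Phi> C] \<Phi> T(1) by blast
  have lowA: "r2 - 2 * \<delta> < \<Psi> z" if zA: "z \<in> A" for z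
  proof -
    obtain i where "i \<in> T" "\<Phi> i z \<le> \<Psi> z + \<delta>" using \<Psi>(2)[of z] by blast
    moreover have "r2 - \<delta> < \<Phi> i z" using \<Phi> T(1) calculation(1) zA by blast
    ultimately show ?thesis by linarith
  qed
  have upB: "\<Psi> w < 3 * \<delta>" if wB: "w \<in> B" for w
  proof -
    obtain i where "i \<in> T" "\<Phi> i w < 2 * \<delta>" using T(3) wB by blast
    then show ?thesis using \<Psi>(2)[of w] by force
  qed
  have "r \<le> \<Psi> x - \<Psi> y" if "x \<in> A" "y \<in> B" for x y
  proof -
    have "r2 - 5 * \<delta> = r" unfolding \<delta>_def by (simp add: field_simps)
    then show ?thesis using lowA[OF that(1)] upB[OF that(2)] by linarith
  qed
  then show ?thesis using \<Psi>(1) by blast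
qed

theorem lemma4p2:
  fixes C :: "real^'n \<Rightarrow> real^'n^'n" and A B :: "(real^'n) set"
  assumes "coeff_ok C" and "compact A" and "compact B"
  shows "setdist_hat_C C A B = setdist_C C A B"
proof (rule antisym)
  show "setdist_hat_C C A B \<le> setdist_C C A B"
    unfolding setdist_hat_C_def setdist_C_def
  proof (rule SUP_least)
    fix \<psi> assume \<psi>: "\<psi> \<in> Dset C"
    show "(INF p\<in>A \<times> B. ereal (\<psi> (fst p) - \<psi> (snd p))) \<le> (INF p\<in>A \<times> B. dist_C C (fst p) (snd p))"
    proof (rule INF_mono)
      fix p assume "p \<in> A \<times> B"
      moreover have "ereal (\<psi> (fst p) - \<psi> (snd p)) \<le> dist_C C (fst p) (snd p)"
        unfolding dist_C_def using \<psi> by (rule SUP_upper)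
      ultimately show "\<exists>q\<in>A \<times> B. ereal (\<psi> (fst q) - \<psi> (snd q)) \<le> dist_C C (fst p) (snd p)"
        by blast
    qed
  qed
  show "setdist_C C A B \<le> setdist_hat_C C A B"
  proof (rule ccontr)
    assume "\<not> setdist_C C A B \<le> setdist_hat_C C A B"
    then have "setdist_hat_C C A B < setdist_C C A B" by simp
    then obtain r where r: "setdist_hat_C C A B < ereal r" "ereal r < setdist_C C A B"
      using ereal_dense2 by blast
    then obtain r2 where r2: "ereal r < ereal r2" "ereal r2 < setdist_C C A B"
      using ereal_dense2 by blast
    have allr2: "\<forall>x\<in>A. \<forall>y\<in>B. ereal r2 < dist_C C x y"
    proof (intro ballI)
      fix x y assume "x \<in> A" "y \<in> B"
      then have "setdist_C C A B \<le> dist_C C x y"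
        unfolding setdist_C_def by (intro INF_lower2[of "(x,y)"]) auto
      then show "ereal r2 < dist_C C x y" using r2(2) by simp
    qed
    then obtain \<psi> where \<psi>: "\<psi> \<in> Dset C" "\<forall>x\<in>A. \<forall>y\<in>B. r \<le> \<psi> x - \<psi> y"
      using main_sep[OF assms(2,3) _ allr2, of r] r2(1) by auto
    have "ereal r \<le> (INF p\<in>A \<times> B. ereal (\<psi> (fst p) - \<psi> (snd p)))"
      using \<psi>(2) by (intro INF_greatest) auto
    also have "\<dots> \<le> setdist_hat_C C A B"
      unfolding setdist_hat_C_def using \<psi>(1) by (rule SUP_upper)
    finally show False using r(1) by simp
  qed
qed

end
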